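(* Let $\Phi(z)\in K(z)$ have degree $d\ge2$ and put $B_0=B_0(\Phi)$. Assume $\Phi(0)=0$ and $\Phi$ has no poles in $D(0,B_0)^-$, so that $\Phi(D(0,B_0)^-)=D(0,f_\Phi(B_0))^-$, where $f_\Phi(r)=\mathrm{diam}_\infty(\Phi(\zeta_{0,r}))$ (increasing for $0\le r\le B_0$). Suppose $\Phi$ has $n\ge1$ zeros in $D(0,B_0)^-$ and $m\ge0$ poles in $D(0,1)^-\setminus D(0,B_0)^-$, counted with multiplicity. Then $$f_\Phi(B_0)\le\frac{B_0^{\,n-m}}{\mathrm{GIR}(\Phi)}.$$
   Context: $K$ is a complete, algebraically closed field with a nontrivial nonarchimedean absolute value. $D(a,r)^-=\{z\in K:|z-a|<r\}$. Fix $q>1$. $\mathbf P^1_{\mathrm{Berk}}$ is the Berkovich projective line over $K$ (tree containing $\mathbf P^1(K)$); $\zeta_{a,r}$ is the point of $D(a,r)=\{|z-a|\le r\}$, $\zeta_{a,0}=a$, $\zeta_G=\zeta_{0,1}$; $[x,y]$ unique path, $(x,y]$ half-open. $\mathrm{diam}_\infty(\zeta_{a,r})=r$ for $a\in K$, $r\ge0$. $\rho$ is the logarithmic path metric on $\mathbf H^1=\mathbf P^1_{\mathrm{Berk}}\setminus\mathbf P^1(K)$; $\mathrm{diam}_G(x)=q^{-\rho(\zeta_G,x)}$, explicitly $\mathrm{diam}_G(\zeta_{a,r})=r/\max(1,|a|,r)^2$. $\mathrm{GIR}(\Phi)=\mathrm{diam}_G(\Phi(\zeta_G))$. For $a\in\mathbf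 P^1(K)$, $0<r<1$, $Q_{a,r}$ is the point of $[a,\zeta_G]$ with $\mathrm{diam}_G=r$, $\mathcal B(a,r)^-=\{x:Q_{a,r}\in(x,\zeta_G]\}$, $\mathcal B(a,1)^-=\bigcup_{r<1}\mathcal B(a,r)^-$; $B_0(\Phi)=\sup\{0<r\le1:\Phi(\mathcal B(a,r)^-)\ne\mathbf P^1_{\mathrm{Berk}}\ \forall a\in\mathbf P^1(K)\}$. *)

theory Defs
  imports "HOL-Computational_Algebra.Polynomial" "HOL-Computational_Algebra.Polynomial_Factorial" Complex_Main
begin

definition nonarch_abs :: "('a::field \<Rightarrow> real) \<Rightarrow> bool" where
  "nonarch_abs v \<longleftrightarrow> (\<forall>x. 0 \<le> v x) \<and> (\<forall>x. v x = 0 \<longleftrightarrow> x = 0)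
     \<and> (\<forall>x y. v (x * y) = v x * v y) \<and> (\<forall>x y. v (x + y) \<le> max (v x) (v y))"

definition nontrivial_abs :: "('a::field \<Rightarrow> real) \<Rightarrow> bool" where
  "nontrivial_abs v \<longleftrightarrow> (\<exists>x. v x \<noteq> 0 \<and> v x \<noteq> 1)"

definition complete_abs :: "('a::field \<Rightarrow> real) \<Rightarrow> bool" where
  "complete_abs v \<longleftrightarrow> (\<forall>s::nat \<Rightarrow> 'a.
      (\<forall>e>0. \<exists>N. \<forall>m\<ge>N. \<forall>n\<ge>N. v (s m - s n) < e) \<longrightarrow>
      (\<exists>L. (\<lambda>n. v (s n - L)) \<longlonglongrightarrow> 0))"

definition alg_closed :: "'a::field itself \<Rightarrow> bool" where
  "alg_closed _ \<longleftrightarrow> (\<forall>p::'a poly. 1 \<le> degree p \<longrightarrow> (\<exists>z. poly p z = 0))"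

text \<open>A point of the Berkovich affine line is a multiplicative seminorm on K[T]
  extending the absolute value; the Berkovich projective line adds the point
  at infinity, represented by None.\<close>

type_synonym 'a berk = "('a poly \<Rightarrow> real) option"

definition berk_aff :: "('a::field \<Rightarrow> real) \<Rightarrow> ('a poly \<Rightarrow> real) set" where
  "berk_aff v = {s. (\<forall>c. s [:c:] = v c) \<and> (\<forall>f. 0 \<le> s f)
      \<and> (\<forall>f g. s (f * g) = s f * s g) \<and> (\<forall>f g. s (f + g) \<le> s f + s g)}"

definition berk_line :: "('a::field \<Rightarrow> real) \<Rightarrow> 'a berk set" where
  "berk_line v = insert None (Some ` berk_aff v)"

text \<open>Classical points: P^1(K) is represented by 'a option (None = infinity).\<close>

definition cpt :: "('a::field \<Rightarrow> real) \<Rightarrow> 'a option \<Rightarrow> 'a berk" where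
  "cpt v a = (case a of None \<Rightarrow> None | Some c \<Rightarrow> Some (\<lambda>g. v (poly g c)))"

definition gauss :: "('a::field \<Rightarrow> real) \<Rightarrow> real \<Rightarrow> 'a poly \<Rightarrow> real" where
  "gauss v r g = Max ((\<lambda>i. v (coeff g i) * r ^ i) ` {..degree g})"

definition zeta :: "('a::field \<Rightarrow> real) \<Rightarrow> 'a \<Rightarrow> real \<Rightarrow> 'a berk" where
  "zeta v a r = Some (\<lambda>g. gauss v r (g \<circ>\<^sub>p [:a, 1:]))"

text \<open>A rational function Phi = P/Q is given by coprime P, Q (not both zero).\<close>

definition rat_deg :: "'a::field poly \<Rightarrow> 'a poly \<Rightarrow> nat" where
  "rat_deg P Q = max (degree P) (degree Q)"

text \<open>Homogenised substitution: Q^(deg g) * g(P/Q).\<close>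
definition hsubst :: "'a::field poly \<Rightarrow> 'a poly \<Rightarrow> 'a poly \<Rightarrow> 'a poly" where
  "hsubst g P Q = (\<Sum>i\<le>degree g. smult (coeff g i) (P ^ i * Q ^ (degree g - i)))"

definition rat_act :: "('a::field \<Rightarrow> real) \<Rightarrow> 'a poly \<Rightarrow> 'a poly \<Rightarrow> 'a berk \<Rightarrow> 'a berk" where
  "rat_act v P Q x = (case x of
      None \<Rightarrow> (if degree Q < degree P then None
               else if degree P = degree Q then cpt v (Some (lead_coeff P / lead_coeff Q))
               else cpt v (Some 0))
    | Some s \<Rightarrow> (if s Q = 0 then None
                else Some (\<lambda>g. s (hsubst g P Q) / s Q ^ degree g)))"

definition diam_inf :: "'a::field berk \<Rightarrow> real" where
  "diam_inf x = (case x of None \<Rightarrow> 0 | Some s \<Rightarrow> (INF c. s [:- c, 1:]))"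

definition diam_G :: "'a::field berk \<Rightarrow> real" where
  "diam_G x = (case x of None \<Rightarrow> 0 | Some s \<Rightarrow> diam_inf x / (max 1 (s [:0, 1:]))\<^sup>2)"

definition GIR :: "('a::field \<Rightarrow> real) \<Rightarrow> 'a poly \<Rightarrow> 'a poly \<Rightarrow> real" where
  "GIR v P Q = diam_G (rat_act v P Q (zeta v 0 1))"

definition f_Phi :: "('a::field \<Rightarrow> real) \<Rightarrow> 'a poly \<Rightarrow> 'a poly \<Rightarrow> real \<Rightarrow> real" where
  "f_Phi v P Q r = diam_inf (rat_act v P Q (zeta v 0 r))"

text \<open>Hsia kernel relative to the Gauss point, between a Berkovich point x and a
  classical point a.  The set {x. Q_{a,r} in (x, zeta_G]} is exactly
  {x. hsia_G x a < r} for 0 < r < 1.\<close>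

definition hsia_G :: "('a::field \<Rightarrow> real) \<Rightarrow> 'a berk \<Rightarrow> 'a option \<Rightarrow> real" where
  "hsia_G v x a = (case (x, a) of
      (None, None) \<Rightarrow> 0
    | (None, Some c) \<Rightarrow> 1 / max 1 (v c)
    | (Some s, None) \<Rightarrow> 1 / max 1 (s [:0, 1:])
    | (Some s, Some c) \<Rightarrow> s [:- c, 1:] / (max 1 (s [:0, 1:]) * max 1 (v c)))"

definition sph_disc :: "('a::field \<Rightarrow> real) \<Rightarrow> 'a option \<Rightarrow> real \<Rightarrow> 'a berk set" where
  "sph_disc v a r = {x \<in> berk_line v. hsia_G v x a < r}"

definition B0 :: "('a::field \<Rightarrow> real) \<Rightarrow> 'a poly \<Rightarrow> 'a poly \<Rightarrow> real" where
  "B0 v P Q = Sup {r. 0 < r \<and> r \<le> 1 \<and>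
       (\<forall>a. rat_act v P Q ` sph_disc v a r \<noteq> berk_line v)}"

end

theory Submission imports Defs begin

context
  fixes v :: "'a::field \<Rightarrow> real"
  assumes na: "nonarch_abs v"
begin

lemma v_nonneg: "0 \<le> v x" using na by (simp add: nonarch_abs_def)
lemma v_zero_iff: "v x = 0 \<longleftrightarrow> x = 0" using na by (simp add: nonarch_abs_def)
lemma v_mult: "v (x * y) = v x * v y" using na by (simp add: nonarch_abs_def)
lemma v_add: "v (x + y) \<le> max (v x) (v y)" using na by (simp add: nonarch_abs_def)
lemma v_0[simp]: "v 0 = 0" using v_zero_iff by simp
lemma v_1[simp]: "v 1 = 1"
proof -
  have "v 1 = v 1 * v 1" using v_mult[of 1 1] by simp
  moreover have "v 1 \<noteq> 0" using v_zero_iff by simp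
  ultimately show ?thesis by simp
qed
lemma v_minus1: "v (-1) = 1"
proof -
  have "v (-1) * v (-1) = 1" using v_mult[of "-1" "-1"] by simp
  with v_nonneg[of "-1"] show ?thesis
    by (metis abs_of_nonneg abs_square_eq_1 power2_eq_square)
qed
lemma v_uminus[simp]: "v (- x) = v x"
  using v_mult[of "-1" x] v_minus1 by simp
lemma v_diff: "v (x - y) \<le> max (v x) (v y)"
  using v_add[of x "-y"] by simp
lemma v_pos: "x \<noteq> 0 \<Longrightarrow> 0 < v x" using v_nonneg[of x] v_zero_iff[of x] by linarith
lemma v_strict_add: assumes "v y < v x" shows "v (x + y) = v x"
proof -
  have "v (x + y) \<le> v x" using v_add[of x y] assms by simp
  moreover have "v x \<le> max (v (x + y)) (v y)" using v_add[of "x+y" "-y"] by simp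
  ultimately show ?thesis using assms by linarith
qed
lemma v_strict_diff1: "v y < v x \<Longrightarrow> v (x - y) = v x"
  using v_strict_add[of "-y" x] by simp
lemma v_strict_diff2: "v x < v y \<Longrightarrow> v (x - y) = v y"
  using v_strict_add[of x "-y"] by simp

lemma gauss_ge: assumes "0 \<le> r" shows "v (coeff g i) * r ^ i \<le> gauss v r g"
proof (cases "i \<le> degree g")
  case True thus ?thesis unfolding gauss_def by (intro Max_ge) auto
next
  case False
  hence "coeff g i = 0" by (simp add: coeff_eq_0)
  moreover have "v (coeff g 0) * r ^ 0 \<le> gauss v r g" unfolding gauss_def by (intro Max_ge) (auto intro!: image_eqI[where x=0])
  ultimately show ?thesis using v_nonneg[of "coeff g 0"] by simp
qed

lemma gauss_nonneg: "0 \<le> r \<Longrightarrow> 0 \<le> gauss v r g"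
  using gauss_ge[of r g 0] v_nonneg[of "coeff g 0"] by simp

lemma gauss_att: "\<exists>i. gauss v r g = v (coeff g i) * r ^ i"
proof -
  have "gauss v r g \<in> (\<lambda>i. v (coeff g i) * r ^ i) ` {..degree g}"
    unfolding gauss_def by (intro Max_in) auto
  thus ?thesis by auto
qed

lemma gauss_eqI: assumes "0 \<le> r" "\<And>i. v (coeff g i) * r ^ i \<le> M" "v (coeff g j) * r ^ j = M"
  shows "gauss v r g = M"
  using gauss_att[of r g] gauss_ge[OF assms(1), of g j] assms(2,3) by (metis order_antisym)

lemma gauss_pos: assumes "0 < r" "g \<noteq> 0" shows "0 < gauss v r g"
proof -
  have "0 < v (coeff g (degree g)) * r ^ degree g"
    using assms v_pos[of "lead_coeff g"] by simp
  thus ?thesis using gauss_ge[of r g "degree g"] assms by simp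
qed

lemma gauss_const: "gauss v r [:c:] = v c"
  by (simp add: gauss_def)

lemma gauss_X: "gauss v r p = gauss v r (p \<circ>\<^sub>p [:0,1:])" by simp

lemma lin_mult_eq: "[:-(a::'a),1:] * h = pCons 0 h - smult a h"
  by (simp add: mult_pCons_left smult_minus_left algebra_simps)

lemma coeff_lin0: "coeff ([:-(a::'a),1:] * h) 0 = - a * coeff h 0"
  unfolding lin_mult_eq by simp
lemma coeff_linS: "coeff ([:-(a::'a),1:] * h) (Suc i) = coeff h i - a * coeff h (Suc i)"
  unfolding lin_mult_eq by simp

lemma gauss_lin: assumes r: "0 < r" and h: "h \<noteq> 0"
  shows "gauss v r ([:-a,1:] * h) = max r (v a) * gauss v r h"
proof -
  define G where "G = gauss v r h"
  have Gpos: "0 < G" unfolding G_def using gauss_pos[OF r h] .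
  have ge: "\<And>i. v (coeff h i) * r ^ i \<le> G" unfolding G_def using gauss_ge r by simp
  have up: "v (coeff ([:-a,1:] * h) i) * r ^ i \<le> max r (v a) * G" for i
  proof (cases i)
    case 0
    have "v (a * coeff h 0) \<le> v a * G" using ge[of 0] v_nonneg[of a] by (simp add: v_mult mult_left_mono)
    also have "\<dots> \<le> max r (v a) * G" using Gpos by (intro mult_right_mono) auto
    finally show ?thesis using 0 by (simp add: coeff_lin0)
  next
    case (Suc j)
    have "v (coeff h j - a * coeff h (Suc j)) * r ^ Suc j
        \<le> max (v (coeff h j)) (v (a * coeff h (Suc j))) * r ^ Suc j"
      using r by (intro mult_right_mono v_diff) auto
    also have "\<dots> = max (v (coeff h j) * r ^ Suc j) (v (a * coeff h (Suc j)) * r ^ Suc j)"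
      using r by (simp add: max_mult_distrib_right)
    also have "\<dots> = max (r * (v (coeff h j) * r ^ j)) (v a * (v (coeff h (Suc j)) * r ^ Suc j))"
      by (simp add: v_mult mult_ac)
    also have "\<dots> \<le> max (r * G) (v a * G)"
      using ge[of j] ge[of "Suc j"] r v_nonneg[of a] by (intro max.mono mult_left_mono) auto
    also have "\<dots> = max r (v a) * G" using Gpos by (simp add: max_mult_distrib_right)
    finally show ?thesis using Suc by (simp add: coeff_linS)
  qed
  define S where "S = {i. v (coeff h i) * r ^ i = G}"
  have Ssub: "S \<subseteq> {..degree h}"
  proof
    fix i assume "i \<in> S"
    hence "v (coeff h i) \<noteq> 0" using Gpos by (auto simp: S_def)
    hence "coeff h i \<noteq> 0" by auto
    thus "i \<in> {..degree h}" using le_degree by auto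
  qed
  have finS: "finite S" using Ssub finite_subset by blast
  have neS: "S \<noteq> {}" using gauss_att[of r h] by (auto simp: S_def G_def)
  have "\<exists>j. v (coeff ([:-a,1:] * h) j) * r ^ j = max r (v a) * G"
  proof (cases "v a \<le> r")
    case True
    define i where "i = Max S"
    have iS: "i \<in> S" using finS neS by (simp add: i_def)
    have "Suc i \<notin> S" using Max_ge[OF finS, of "Suc i"] i_def by auto
    hence lt: "v (coeff h (Suc i)) * r ^ Suc i < G" using ge[of "Suc i"] by (auto simp: S_def)
    have "v (a * coeff h (Suc i)) * r ^ Suc i = v a * (v (coeff h (Suc i)) * r ^ Suc i)"
      by (simp add: v_mult)
    also have "\<dots> \<le> r * (v (coeff h (Suc i)) * r ^ Suc i)"
      using True v_nonneg[of "coeff h (Suc i)"] r by (intro mult_right_mono) auto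
    also have "\<dots> < r * G" using lt r by simp
    also have "\<dots> = v (coeff h i) * r ^ Suc i" using iS by (simp add: S_def)
    finally have "v (a * coeff h (Suc i)) < v (coeff h i)" using r by simp
    hence "v (coeff ([:-a,1:] * h) (Suc i)) = v (coeff h i)"
      by (simp add: coeff_linS v_strict_diff1)
    hence "v (coeff ([:-a,1:] * h) (Suc i)) * r ^ Suc i = r * G" using iS by (simp add: S_def)
    thus ?thesis using True by (intro exI[of _ "Suc i"]) (simp add: max_def)
  next
    case False
    define i where "i = Min S"
    have iS: "i \<in> S" using finS neS by (simp add: i_def)
    have va: "v (a * coeff h i) * r ^ i = v a * G" using iS by (simp add: S_def v_mult)
    show ?thesis
    proof (cases i)
      case 0
      thus ?thesis using va False by (intro exI[of _ 0]) (simp add: coeff_lin0 max_def)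
    next
      case (Suc j)
      have "j \<notin> S" using Min_le[OF finS, of j] i_def Suc by auto
      hence lt: "v (coeff h j) * r ^ j < G" using ge[of j] by (auto simp: S_def)
      have "v (coeff h j) * r ^ Suc j = r * (v (coeff h j) * r ^ j)" by simp
      also have "\<dots> < r * G" using lt r by simp
      also have "\<dots> < v a * G" using False Gpos by simp
      finally have "v (coeff h j) * r ^ Suc j < v (a * coeff h (Suc j)) * r ^ Suc j" using va Suc by simp
      hence "v (coeff h j) < v (a * coeff h (Suc j))" using r mult_less_cancel_right_pos[of "r ^ Suc j"] by simp
      hence "v (coeff ([:-a,1:] * h) i) = v (a * coeff h i)"
        using Suc by (simp add: coeff_linS v_strict_diff2)
      thus ?thesis using va False by (intro exI[of _ i]) (simp add: max_def)
    qed
  qed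
  then obtain j where "v (coeff ([:-a,1:] * h) j) * r ^ j = max r (v a) * G" by blast
  thus ?thesis using up r unfolding G_def by (intro gauss_eqI) auto
qed

lemma order_lin: "order z [:-(a::'a),1:] = (if z = a then 1 else 0)"
proof (cases "z = a")
  case True thus ?thesis using order_power_n_n[of a 1] by simp
next
  case False thus ?thesis by (simp add: order_0I)
qed

lemma root_sum_step: assumes h: "h \<noteq> 0"
  shows "(\<Sum>z\<in>{z. poly ([:-(a::'a),1:]*h) z = 0 \<and> C z}. order z ([:-a,1:]*h))
       = (\<Sum>z\<in>{z. poly h z = 0 \<and> C z}. order z h) + (if C a then 1 else 0)"
proof -
  define Sg where "Sg = {z. poly ([:-(a::'a),1:]*h) z = 0 \<and> C z}"
  define Sh where "Sh = {z. poly h z = 0 \<and> C z}"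
  have nz: "[:-a,1:]*h \<noteq> 0" using h by (simp del: mult_pCons_left)
  have finG: "finite Sg" unfolding Sg_def using poly_roots_finite[OF nz] by (rule rev_finite_subset) auto
  have sub: "Sh \<subseteq> Sg" unfolding Sh_def Sg_def by auto
  have "(\<Sum>z\<in>Sg. order z ([:-a,1:]*h)) = (\<Sum>z\<in>Sg. (if z = a then 1 else 0) + order z h)"
    using nz by (intro sum.cong refl) (simp add: order_mult order_lin del: mult_pCons_left)
  also have "\<dots> = (\<Sum>z\<in>Sg. (if z = a then 1 else 0)) + (\<Sum>z\<in>Sg. order z h)"
    by (simp add: sum.distrib)
  also have "(\<Sum>z\<in>Sg. (if z = a then 1 else 0)) = (if C a then 1 else (0::nat))"
    using finG by (simp add: Sg_def)
  also have "(\<Sum>z\<in>Sg. order z h) = (\<Sum>z\<in>Sh. order z h)"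
    using finG sub by (intro sum.mono_neutral_right) (auto simp: Sh_def Sg_def intro: order_0I, metis order_root neq0_conv)
  finally show ?thesis unfolding Sg_def Sh_def by simp
qed

lemma factor_step: assumes alg: "alg_closed TYPE('a)" and d: "degree g = Suc k"
  obtains a h where "g = [:-(a::'a),1:] * h" "h \<noteq> 0" "degree h = k"
proof -
  have "1 \<le> degree g" using d by simp
  then obtain a where "poly g a = 0" using alg unfolding alg_closed_def by blast
  then obtain h where gh: "g = [:-a,1:] * h" using poly_eq_0_iff_dvd by (metis dvdE)
  have g0: "g \<noteq> 0" using d by auto
  hence h0: "h \<noteq> 0" using gh by auto
  have "degree g = 1 + degree h" using gh h0 by (simp add: degree_mult_eq del: mult_pCons_left)
  thus ?thesis using that gh h0 d by simp
qed

lemma gauss_zeros: assumes alg: "alg_closed TYPE('a)" and B: "0 < B" and g: "g \<noteq> 0"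
  shows "gauss v B g \<le> B ^ (\<Sum>z\<in>{z. poly g z = 0 \<and> v z < B}. order z g) * gauss v 1 g"
  using g
proof (induction "degree g" arbitrary: g)
  case 0
  then obtain c where gc: "g = [:c:]" by (metis degree_eq_zeroE)
  hence "c \<noteq> 0" using 0 by auto
  hence "{z. poly g z = 0 \<and> v z < B} = {}" using gc by auto
  hence s0: "(\<Sum>z\<in>{z. poly g z = 0 \<and> v z < B}. order z g) = 0" by (metis sum.empty)
  have e: "gauss v B g = gauss v 1 g" using gc by (simp add: gauss_const)
  show ?case unfolding s0 e by simp
next
  case (Suc k)
  obtain a h where gh: "g = [:-a,1:] * h" "h \<noteq> 0" "degree h = k"
    using factor_step[OF alg Suc(2)[symmetric]] by blast
  have IH: "gauss v B h \<le> B ^ (\<Sum>z\<in>{z. poly h z = 0 \<and> v z < B}. order z h) * gauss v 1 h"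
    using Suc gh by simp
  define N where "N = (\<Sum>z\<in>{z. poly h z = 0 \<and> v z < B}. order z h)"
  have sum: "(\<Sum>z\<in>{z. poly g z = 0 \<and> v z < B}. order z g) = N + (if v a < B then 1 else 0)"
    unfolding gh(1) N_def by (rule root_sum_step[OF gh(2)])
  have eB: "gauss v B g = max B (v a) * gauss v B h" using gh gauss_lin B by simp
  have e1: "gauss v 1 g = max 1 (v a) * gauss v 1 h" using gh gauss_lin by simp
  have h1: "0 \<le> gauss v 1 h" "0 \<le> gauss v B h" using gauss_nonneg B by auto
  show ?case
  proof (cases "v a < B")
    case True
    have "gauss v B g = B * gauss v B h" using eB True by simp
    also have "\<dots> \<le> B * (B ^ N * gauss v 1 h)" using IH B unfolding N_def by simp
    also have "\<dots> \<le> B * (B ^ N * (max 1 (v a) * gauss v 1 h))"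
      using B h1 by (intro mult_left_mono) (auto intro: mult_le_cancel_right1[THEN iffD2] simp: mult_le_cancel_right1)
    finally show ?thesis using sum True e1 by (simp add: mult_ac)
  next
    case False
    have "gauss v B g = v a * gauss v B h" using eB False by simp
    also have "\<dots> \<le> max 1 (v a) * (B ^ N * gauss v 1 h)"
      using IH v_nonneg[of a] h1 unfolding N_def by (intro mult_mono) auto
    finally show ?thesis using sum False e1 by (simp add: mult_ac)
  qed
qed

lemma gauss_poles: assumes alg: "alg_closed TYPE('a)" and B: "0 < B" and g: "g \<noteq> 0"
  and nr: "\<forall>z. v z < B \<longrightarrow> poly g z \<noteq> 0"
  shows "B ^ (\<Sum>z\<in>{z. poly g z = 0 \<and> B \<le> v z \<and> v z < 1}. order z g) * gauss v 1 g \<le> gauss v B g"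
  using g nr
proof (induction "degree g" arbitrary: g)
  case 0
  then obtain c where gc: "g = [:c:]" by (metis degree_eq_zeroE)
  hence "c \<noteq> 0" using 0 by auto
  hence "{z. poly g z = 0 \<and> B \<le> v z \<and> v z < 1} = {}" using gc by auto
  hence s0: "(\<Sum>z\<in>{z. poly g z = 0 \<and> B \<le> v z \<and> v z < 1}. order z g) = 0" by (metis sum.empty)
  have e: "gauss v B g = gauss v 1 g" using gc by (simp add: gauss_const)
  show ?case unfolding s0 e by simp
next
  case (Suc k)
  obtain a h where gh: "g = [:-a,1:] * h" "h \<noteq> 0" "degree h = k"
    using factor_step[OF alg Suc(2)[symmetric]] by blast
  have nrh: "\<forall>z. v z < B \<longrightarrow> poly h z \<noteq> 0" using Suc(4) gh(1) by auto
  have va: "B \<le> v a" using Suc(4) gh(1) by (metis not_le poly_eq_0_iff_dvd dvd_triv_left)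
  have IH: "B ^ (\<Sum>z\<in>{z. poly h z = 0 \<and> B \<le> v z \<and> v z < 1}. order z h) * gauss v 1 h \<le> gauss v B h"
    using Suc gh nrh by simp
  define N where "N = (\<Sum>z\<in>{z. poly h z = 0 \<and> B \<le> v z \<and> v z < 1}. order z h)"
  have sum: "(\<Sum>z\<in>{z. poly g z = 0 \<and> B \<le> v z \<and> v z < 1}. order z g) = N + (if B \<le> v a \<and> v a < 1 then 1 else 0)"
    unfolding gh(1) N_def by (rule root_sum_step[OF gh(2)])
  have eB: "gauss v B g = v a * gauss v B h" using gh gauss_lin B va by (simp add: max_def)
  have e1: "gauss v 1 g = max 1 (v a) * gauss v 1 h" using gh gauss_lin by simp
  have h1: "0 \<le> gauss v 1 h" "0 \<le> gauss v B h" using gauss_nonneg B by auto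
  show ?case
  proof (cases "v a < 1")
    case True
    have "B ^ Suc N * gauss v 1 g = B * (B ^ N * gauss v 1 h)" using e1 True by simp
    also have "\<dots> \<le> v a * gauss v B h" using IH va B h1 unfolding N_def by (intro mult_mono) auto
    finally show ?thesis using sum True va eB by simp
  next
    case False
    have "B ^ N * gauss v 1 g = v a * (B ^ N * gauss v 1 h)" using e1 False by (simp add: max_def mult_ac)
    also have "\<dots> \<le> v a * gauss v B h" using IH v_nonneg[of a] unfolding N_def by (intro mult_left_mono) auto
    finally show ?thesis using sum False eB by simp
  qed
qed

lemma hsubst_lin: "hsubst [:-c,1:] P Q = P - smult c (Q::'a::field poly)"
  unfolding hsubst_def by (simp add: atMost_Suc smult_minus_left)

lemma hsubst_X: "hsubst [:0,1:] P Q = (P::'a::field poly)"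
  using hsubst_lin[of 0 P Q] by simp

lemma zeta0: "zeta v 0 r = Some (gauss v r)"
  unfolding zeta_def by simp

lemma rat_act_zeta0: assumes "gauss v r Q \<noteq> 0"
  shows "rat_act v P Q (zeta v 0 r) = Some (\<lambda>g. gauss v r (hsubst g P Q) / gauss v r Q ^ degree g)"
  using assms unfolding zeta0 rat_act_def by simp

lemma diam_zeta0: assumes "gauss v r Q \<noteq> 0"
  shows "diam_inf (rat_act v P Q (zeta v 0 r)) = (INF c. gauss v r (P - smult c Q) / gauss v r Q)"
  using assms unfolding rat_act_zeta0[OF assms] diam_inf_def by (simp add: hsubst_lin)

lemma noprop: assumes "coprime P Q" "Q \<noteq> 0" "rat_deg P Q \<ge> 2"
  shows "\<exists>i. coeff P i * lead_coeff Q \<noteq> coeff P (degree Q) * coeff (Q::'a::field poly) i"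
proof (rule ccontr)
  assume "\<not> ?thesis"
  hence all: "\<And>i. coeff P i * lead_coeff Q = coeff P (degree Q) * coeff Q i" by blast
  define c where "c = coeff P (degree Q) / lead_coeff Q"
  have lc: "lead_coeff Q \<noteq> 0" using assms(2) by simp
  have "P = smult c Q"
  proof (rule poly_eqI)
    fix i
    have "coeff P i = coeff P (degree Q) * coeff Q i / lead_coeff Q"
      using all[of i] lc by (simp add: eq_divide_eq)
    thus "coeff P i = coeff (smult c Q) i" by (simp add: c_def)
  qed
  hence "Q dvd P" by (simp add: dvd_smult)
  hence "is_unit Q" using assms(1) by (metis coprime_common_divisor dvd_refl)
  hence dQ: "degree Q = 0" using is_unit_iff_degree[OF assms(2)] by simp
  have "degree P \<le> degree Q" using \<open>P = smult c Q\<close> degree_smult_le by simp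
  thus False using assms(3) dQ by (simp add: rat_deg_def)
qed

end

theorem lemma5p5:
  fixes v :: "'a::field \<Rightarrow> real" and P Q :: "'a poly" and n m :: nat
  assumes "nonarch_abs v" and "nontrivial_abs v" and "complete_abs v"
    and "alg_closed TYPE('a)"
    and "coprime P Q" and "Q \<noteq> 0"
    and "rat_deg P Q \<ge> 2"
    and "poly P 0 = 0" and "poly Q 0 \<noteq> 0"
    and "\<forall>z. v z < B0 v P Q \<longrightarrow> poly Q z \<noteq> 0"
    and "n = (\<Sum>z\<in>{z. poly P z = 0 \<and> v z < B0 v P Q}. order z P)"
    and "m = (\<Sum>z\<in>{z. poly Q z = 0 \<and> B0 v P Q \<le> v z \<and> v z < 1}. order z Q)"
    and "n \<ge> 1"
  shows "f_Phi v P Q (B0 v P Q) \<le> B0 v P Q powr (real n - real m) / GIR v P Q"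
proof -
  note na = assms(1)
  define B where "B = B0 v P Q"
  have Bpos: "0 < B"
  proof (rule ccontr)
    assume "\<not> 0 < B"
    hence "{z. poly P z = 0 \<and> v z < B} = {}" using v_nonneg[OF na] by (auto simp: not_less intro: order.trans)
    hence "n = 0" using assms(11) unfolding B_def by (metis sum.empty)
    thus False using assms(13) by simp
  qed
  obtain i where i: "coeff P i * lead_coeff Q \<noteq> coeff P (degree Q) * coeff Q i"
    using noprop[OF na assms(5,6,7)] by blast
  have P0: "P \<noteq> 0" using i by auto
  have Q0: "Q \<noteq> 0" by (rule assms(6))
  define j where "j = degree Q"
  define Dt where "Dt = coeff P i * coeff Q j - coeff P j * coeff Q i"
  have Dt0: "Dt \<noteq> 0" using i unfolding Dt_def j_def by simp
  define M where "M = max (v (coeff Q i)) (v (coeff Q j))"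
  have Mpos: "0 < M" unfolding M_def j_def using v_pos[OF na, of "lead_coeff Q"] Q0 by simp
  define \<delta> where "\<delta> = v Dt / M"
  have dpos: "0 < \<delta>" unfolding \<delta>_def using Mpos v_pos[OF na Dt0] by simp
  have lowb: "\<delta> \<le> gauss v 1 (P - smult c Q)" for c
  proof -
    let ?G = "gauss v 1 (P - smult c Q)"
    have gi: "v (coeff P i - c * coeff Q i) \<le> ?G" using gauss_ge[OF na, of 1 "P - smult c Q" i] by simp
    have gj: "v (coeff P j - c * coeff Q j) \<le> ?G" using gauss_ge[OF na, of 1 "P - smult c Q" j] by simp
    have "Dt = coeff Q j * (coeff P i - c * coeff Q i) - coeff Q i * (coeff P j - c * coeff Q j)"
      unfolding Dt_def by (simp add: algebra_simps)
    hence "v Dt \<le> max (v (coeff Q j) * v (coeff P i - c * coeff Q i)) (v (coeff Q i) * v (coeff P j - c * coeff Q j))"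
      using v_diff[OF na, of "coeff Q j * (coeff P i - c * coeff Q i)" "coeff Q i * (coeff P j - c * coeff Q j)"]
      by (simp add: v_mult[OF na])
    also have "\<dots> \<le> max (M * ?G) (M * ?G)"
      using gi gj v_nonneg[OF na] unfolding M_def by (intro max.mono mult_mono) (auto simp: le_max_iff_disj)
    finally have "v Dt \<le> M * ?G" by simp
    thus ?thesis unfolding \<delta>_def using Mpos by (simp add: divide_le_eq mult.commute)
  qed
  have gB: "0 < gauss v B P" "0 < gauss v B Q" using gauss_pos[OF na Bpos] P0 Q0 by auto
  have g1: "0 < gauss v 1 P" "0 < gauss v 1 Q" using gauss_pos[OF na, of 1] P0 Q0 by auto
  define R where "R = gauss v 1 P / gauss v 1 Q"
  have Rpos: "0 < R" unfolding R_def using g1 by simp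
  have f1: "f_Phi v P Q B \<le> gauss v B P / gauss v B Q"
  proof -
    have "f_Phi v P Q B = (INF c. gauss v B (P - smult c Q) / gauss v B Q)"
      unfolding f_Phi_def using diam_zeta0[OF na] gB by simp
    also have "\<dots> \<le> gauss v B (P - smult 0 Q) / gauss v B Q"
      by (rule cINF_lower) (auto intro!: bdd_belowI[where m=0] divide_nonneg_nonneg gauss_nonneg[OF na] simp: Bpos less_imp_le)
    finally show ?thesis by simp
  qed
  define D1 where "D1 = (INF c. gauss v 1 (P - smult c Q) / gauss v 1 Q)"
  have D1pos: "0 < D1"
  proof -
    have "\<delta> / gauss v 1 Q \<le> D1" unfolding D1_def
      using g1 lowb by (intro cINF_greatest) (auto intro: divide_right_mono)
    moreover have "0 < \<delta> / gauss v 1 Q" using dpos g1 by simp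
    ultimately show ?thesis by linarith
  qed
  have D1le: "D1 \<le> R"
  proof -
    have "D1 \<le> gauss v 1 (P - smult 0 Q) / gauss v 1 Q" unfolding D1_def
      by (rule cINF_lower) (auto intro!: bdd_belowI[where m=0] divide_nonneg_nonneg gauss_nonneg[OF na])
    thus ?thesis by (simp add: R_def)
  qed
  have GIR_eq: "GIR v P Q = D1 / (max 1 R)\<^sup>2"
  proof -
    have ne: "gauss v 1 Q \<noteq> 0" using g1 by simp
    have "GIR v P Q = diam_G (rat_act v P Q (zeta v 0 1))" by (simp add: GIR_def)
    also have "\<dots> = D1 / (max 1 R)\<^sup>2"
      unfolding diam_G_def rat_act_zeta0[OF na ne] using diam_zeta0[OF na ne, of P]
      unfolding rat_act_zeta0[OF na ne] by (simp add: D1_def R_def hsubst_X[OF na, of P Q])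
    finally show ?thesis .
  qed
  have GIRpos: "0 < GIR v P Q" using GIR_eq D1pos by simp
  have RG: "R \<le> 1 / GIR v P Q"
  proof -
    have "GIR v P Q \<le> R / (max 1 R)\<^sup>2" using GIR_eq D1le by (simp add: divide_right_mono)
    also have "\<dots> \<le> 1 / R"
    proof -
      have m: "R \<le> max 1 R" "0 < max 1 R" by auto
      have "R * R \<le> max 1 R * max 1 R" using m Rpos by (intro mult_mono) auto
      thus ?thesis using m Rpos by (simp add: divide_simps power2_eq_square)
    qed
    finally have "GIR v P Q \<le> 1 / R" .
    thus ?thesis using GIRpos Rpos by (simp add: divide_simps mult.commute)
  qed
  have Pz: "gauss v B P \<le> B ^ n * gauss v 1 P"
    using gauss_zeros[OF na assms(4) Bpos P0] assms(11) unfolding B_def by simp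
  have Qp: "B ^ m * gauss v 1 Q \<le> gauss v B Q"
    using gauss_poles[OF na assms(4) Bpos Q0] assms(10,12) unfolding B_def by simp
  have "gauss v B P / gauss v B Q \<le> (B ^ n * gauss v 1 P) / (B ^ m * gauss v 1 Q)"
    using Pz Qp gB g1 Bpos by (intro frac_le) auto
  also have "\<dots> = B powr (real n - real m) * R"
    using Bpos by (simp add: R_def powr_diff powr_realpow)
  also have "\<dots> \<le> B powr (real n - real m) * (1 / GIR v P Q)"
    using RG by (intro mult_left_mono) auto
  finally show ?thesis using f1 unfolding B_def by simp
qed

end
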